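(* Let $q$ be a prime power, $n\ge 1$, and $t$ transcendental over $\mathbb{F}_q$. Let $L(x)\in\mathbb{F}_q[x]$ be a monic $q$-polynomial of $q$-degree $n$. Then $(L(x)+tx)/x$ is irreducible over $\mathbb{F}_q(t)$; consequently $q^n-1$ divides the order of the Galois group of $L(x)+tx$ over $\mathbb{F}_q(t)$.
   Context: A $q$-polynomial over a field $F\supseteq\mathbb{F}_q$ is a polynomial of the form $a_0x+a_1x^q+\cdots+a_nx^{q^n}\in F[x]$; if $a_n\neq 0$ its $q$-degree is $n$. *)

theory Defs
  imports "HOL-Computational_Algebra.Computational_Algebra"
begin

definition q_poly :: "nat \<Rightarrow> nat \<Rightarrow> (nat \<Rightarrow> 'a::field) \<Rightarrow> 'a poly" where
  "q_poly q n a = (\<Sum>i\<le>n. monom (a i) (q ^ i))"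

definition tvar :: "'a::field poly fract" where
  "tvar = to_fract [:0, 1:]"

definition lift_Ft :: "'a::field poly \<Rightarrow> 'a poly fract poly" where
  "lift_Ft p = map_poly (\<lambda>c. to_fract [:c:]) p"

definition field_embedding :: "('a::field \<Rightarrow> 'c::field) \<Rightarrow> bool" where
  "field_embedding \<phi> \<longleftrightarrow> inj \<phi> \<and> \<phi> 1 = 1 \<and>
     (\<forall>x y. \<phi> (x + y) = \<phi> x + \<phi> y) \<and> (\<forall>x y. \<phi> (x * y) = \<phi> x * \<phi> y)"

definition splits :: "'c::field poly \<Rightarrow> bool" where
  "splits p \<longleftrightarrow> (\<exists>c rs. p = smult c (\<Prod>r\<leftarrow>rs. [:- r, 1:]))"

definition is_subfield :: "'c::field set \<Rightarrow> bool" where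
  "is_subfield S \<longleftrightarrow> 0 \<in> S \<and> 1 \<in> S \<and>
     (\<forall>x\<in>S. \<forall>y\<in>S. x + y \<in> S \<and> x * y \<in> S) \<and>
     (\<forall>x\<in>S. - x \<in> S \<and> inverse x \<in> S)"

definition gen_subfield :: "'c::field set \<Rightarrow> 'c set" where
  "gen_subfield A = \<Inter>{S. A \<subseteq> S \<and> is_subfield S}"

definition splitting_field_in :: "('a::field \<Rightarrow> 'c::field) \<Rightarrow> 'a poly \<Rightarrow> 'c set" where
  "splitting_field_in \<phi> f = gen_subfield (range \<phi> \<union> {x. poly (map_poly \<phi> f) x = 0})"

definition galois_group :: "('a::field \<Rightarrow> 'c::field) \<Rightarrow> 'a poly \<Rightarrow> ('c \<Rightarrow> 'c) set" where
  "galois_group \<phi> f = (let K = splitting_field_in \<phi> f in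
     {\<sigma>. bij_betw \<sigma> K K \<and>
          (\<forall>x\<in>K. \<forall>y\<in>K. \<sigma> (x + y) = \<sigma> x + \<sigma> y \<and> \<sigma> (x * y) = \<sigma> x * \<sigma> y) \<and>
          (\<forall>a. \<sigma> (\<phi> a) = \<phi> a) \<and> (\<forall>x. x \<notin> K \<longrightarrow> \<sigma> x = x)})"

end

theory Submission
  imports Defs "Subresultants.More_Homomorphisms"
begin

section \<open>Subfields, local homomorphisms, polynomials over subfields\<close>

definition pover :: "'c::field set \<Rightarrow> 'c poly \<Rightarrow> bool" where
  "pover E p \<longleftrightarrow> (\<forall>i. coeff p i \<in> E)"

definition homo :: "'c::field set \<Rightarrow> ('c \<Rightarrow> 'c) \<Rightarrow> bool" where
  "homo E \<tau> \<longleftrightarrow> \<tau> 1 = 1 \<and> (\<forall>x\<in>E. \<forall>y\<in>E. \<tau> (x + y) = \<tau> x + \<tau> y \<and> \<tau> (x * y) = \<tau> x * \<tau> y)"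

context fixes E :: "'c::field set" assumes sf: "is_subfield E"
begin

lemma sf_0[simp]: "0 \<in> E" and sf_1[simp]: "1 \<in> E"
  using sf unfolding is_subfield_def by auto

lemma sf_add[simp]: "x \<in> E \<Longrightarrow> y \<in> E \<Longrightarrow> x + y \<in> E"
  and sf_mult[simp]: "x \<in> E \<Longrightarrow> y \<in> E \<Longrightarrow> x * y \<in> E"
  and sf_uminus[simp]: "x \<in> E \<Longrightarrow> - x \<in> E"
  and sf_inverse[simp]: "x \<in> E \<Longrightarrow> inverse x \<in> E"
  using sf unfolding is_subfield_def by auto

lemma sf_diff[simp]: "x \<in> E \<Longrightarrow> y \<in> E \<Longrightarrow> x - y \<in> E"
  using sf_add[of x "-y"] by simp

lemma sf_divide[simp]: "x \<in> E \<Longrightarrow> y \<in> E \<Longrightarrow> x / y \<in> E"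
  by (simp add: divide_inverse)

lemma sf_sum: "(\<And>i. i \<in> A \<Longrightarrow> f i \<in> E) \<Longrightarrow> sum f A \<in> E"
  by (induction A rule: infinite_finite_induct) auto

lemma sf_power[simp]: "x \<in> E \<Longrightarrow> x ^ n \<in> E"
  by (induction n) auto

lemma pover_0[simp]: "pover E 0" and pover_1[simp]: "pover E 1"
  by (auto simp: pover_def coeff_1)

lemma pover_const[simp]: "pover E [:c:] \<longleftrightarrow> c \<in> E"
  by (auto simp: pover_def coeff_pCons split: nat.splits)

lemma pover_pCons[simp]: "pover E (pCons c p) \<longleftrightarrow> c \<in> E \<and> pover E p"
  by (auto simp: pover_def coeff_pCons split: nat.splits)

lemma pover_add[simp]: "pover E p \<Longrightarrow> pover E q \<Longrightarrow> pover E (p + q)"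
  and pover_diff[simp]: "pover E p \<Longrightarrow> pover E q \<Longrightarrow> pover E (p - q)"
  and pover_uminus[simp]: "pover E p \<Longrightarrow> pover E (- p)"
  by (auto simp: pover_def)

lemma pover_mult[simp]: "pover E p \<Longrightarrow> pover E q \<Longrightarrow> pover E (p * q)"
  unfolding pover_def coeff_mult by (auto intro!: sf_sum)

lemma pover_smult[simp]: "c \<in> E \<Longrightarrow> pover E p \<Longrightarrow> pover E (Polynomial.smult c p)"
  by (auto simp: pover_def)

lemma pover_monom[simp]: "c \<in> E \<Longrightarrow> pover E (monom c n)"
  by (auto simp: pover_def coeff_monom)

lemma poly_in: "pover E p \<Longrightarrow> x \<in> E \<Longrightarrow> poly p x \<in> E"
  unfolding poly_altdef pover_def by (auto intro!: sf_sum)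

lemma lead_in: "pover E p \<Longrightarrow> lead_coeff p \<in> E"
  by (auto simp: pover_def)

context fixes \<tau> :: "'c \<Rightarrow> 'c" assumes hm: "homo E \<tau>"
begin

lemma hom1[simp]: "\<tau> 1 = 1" using hm by (simp add: homo_def)
lemma hom_add: "x \<in> E \<Longrightarrow> y \<in> E \<Longrightarrow> \<tau> (x + y) = \<tau> x + \<tau> y"
  using hm by (simp add: homo_def)
lemma hom_mult: "x \<in> E \<Longrightarrow> y \<in> E \<Longrightarrow> \<tau> (x * y) = \<tau> x * \<tau> y"
  using hm by (simp add: homo_def)
lemma hom0[simp]: "\<tau> 0 = 0"
proof -
  have "\<tau> 0 + \<tau> 0 = \<tau> 0 + 0" using hom_add[of 0 0] by simp
  then show ?thesis by (simp only: add_left_cancel)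
qed
lemma hom_uminus: "x \<in> E \<Longrightarrow> \<tau> (- x) = - \<tau> x"
  using hom_add[of x "-x"] by (simp add: add_eq_0_iff)
lemma hom_diff: "x \<in> E \<Longrightarrow> y \<in> E \<Longrightarrow> \<tau> (x - y) = \<tau> x - \<tau> y"
  using hom_add[of x "-y"] hom_uminus[of y] by simp
lemma hom_inverse: "x \<in> E \<Longrightarrow> \<tau> (inverse x) = inverse (\<tau> x)"
proof (cases "x = 0")
  case False
  assume x: "x \<in> E"
  have "\<tau> x * \<tau> (inverse x) = 1" using hom_mult[of x "inverse x"] x False by simp
  then show ?thesis by (metis inverse_unique)
qed simp
lemma hom_nz: "x \<in> E \<Longrightarrow> x \<noteq> 0 \<Longrightarrow> \<tau> x \<noteq> 0"
  using hom_mult[of x "inverse x"] by auto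
lemma hom_inj: "inj_on \<tau> E"
proof (rule inj_onI)
  fix x y assume "x \<in> E" "y \<in> E" "\<tau> x = \<tau> y"
  then have "\<tau> (x - y) = 0" by (simp add: hom_diff)
  then show "x = y" using hom_nz[of "x - y"] \<open>x \<in> E\<close> \<open>y \<in> E\<close> by auto
qed
lemma hom_sum: "(\<And>i. i \<in> A \<Longrightarrow> f i \<in> E) \<Longrightarrow> \<tau> (sum f A) = (\<Sum>i\<in>A. \<tau> (f i))"
  by (induction A rule: infinite_finite_induct) (auto simp: hom_add sf_sum)
lemma hom_power: "x \<in> E \<Longrightarrow> \<tau> (x ^ n) = \<tau> x ^ n"
  by (induction n) (auto simp: hom_mult)

lemma coeff_mp[simp]: "coeff (map_poly \<tau> p) i = \<tau> (coeff p i)"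
  by (simp add: coeff_map_poly)

lemma mp_add: "pover E p \<Longrightarrow> pover E q \<Longrightarrow> map_poly \<tau> (p + q) = map_poly \<tau> p + map_poly \<tau> q"
  by (rule poly_eqI) (auto simp: pover_def hom_add)
lemma mp_uminus: "pover E p \<Longrightarrow> map_poly \<tau> (- p) = - map_poly \<tau> p"
  by (rule poly_eqI) (auto simp: pover_def hom_uminus)
lemma mp_diff: "pover E p \<Longrightarrow> pover E q \<Longrightarrow> map_poly \<tau> (p - q) = map_poly \<tau> p - map_poly \<tau> q"
  by (rule poly_eqI) (auto simp: pover_def hom_diff)
lemma mp_mult: "pover E p \<Longrightarrow> pover E q \<Longrightarrow> map_poly \<tau> (p * q) = map_poly \<tau> p * map_poly \<tau> q"
  by (rule poly_eqI) (auto simp: pover_def coeff_mult hom_sum hom_mult)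
lemma mp_const[simp]: "map_poly \<tau> [:c:] = [:\<tau> c:]"
  by (rule poly_eqI) (auto simp: coeff_pCons split: nat.splits)
lemma mp_smult: "c \<in> E \<Longrightarrow> pover E p \<Longrightarrow> map_poly \<tau> (Polynomial.smult c p) = Polynomial.smult (\<tau> c) (map_poly \<tau> p)"
  by (rule poly_eqI) (auto simp: pover_def hom_mult)
lemma mp_x[simp]: "map_poly \<tau> [:0, 1:] = [:0, 1:]"
  by (rule poly_eqI) (auto simp: coeff_pCons split: nat.splits)

lemma poly_sum_upto: "degree p \<le> N \<Longrightarrow> poly p (x::'c) = (\<Sum>i\<le>N. coeff p i * x ^ i)"
proof -
  assume "degree p \<le> N"
  then show ?thesis unfolding poly_altdef[of p x]
    by (intro sum.mono_neutral_left) (auto simp: coeff_eq_0)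
qed

lemma poly_mp: "pover E p \<Longrightarrow> x \<in> E \<Longrightarrow> poly (map_poly \<tau> p) (\<tau> x) = \<tau> (poly p x)"
proof -
  assume p: "pover E p" and x: "x \<in> E"
  have d: "degree (map_poly \<tau> p) \<le> degree p" by (rule degree_map_poly_le)
  have "poly (map_poly \<tau> p) (\<tau> x) = (\<Sum>i\<le>degree p. \<tau> (coeff p i) * \<tau> x ^ i)"
    by (subst poly_sum_upto[OF d]) simp
  also have "\<dots> = \<tau> (\<Sum>i\<le>degree p. coeff p i * x ^ i)"
    using p x by (subst hom_sum) (auto simp: pover_def hom_mult hom_power)
  finally show ?thesis by (simp add: poly_altdef)
qed

end

lemma division_exists:
  assumes "pover E p" "pover E m" "m \<noteq> 0"
  shows "\<exists>q r. pover E q \<and> pover E r \<and> p = q * m + r \<and> (r = 0 \<or> degree r < degree m)"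
  using assms(1)
proof (induction "degree p" arbitrary: p rule: less_induct)
  case (less p)
  show ?case
  proof (cases "p = 0 \<or> degree p < degree m")
    case True
    then show ?thesis using less.prems by (intro exI[of _ 0] exI[of _ p]) auto
  next
    case False
    then have p0: "p \<noteq> 0" and dm: "degree m \<le> degree p" by auto
    define c where "c = lead_coeff p / lead_coeff m"
    define s where "s = monom c (degree p - degree m)"
    have c0: "c \<noteq> 0" using p0 assms(3) by (simp add: c_def)
    have cE: "c \<in> E" unfolding c_def using lead_in less.prems assms(2) by simp
    have sE: "pover E s" using cE by (simp add: s_def)
    have ds: "degree (s * m) = degree p"
      using c0 assms(3) dm by (simp add: s_def degree_mult_eq degree_monom_eq)
    have ls: "lead_coeff (s * m) = lead_coeff p"
      using c0 assms(3) dm by (simp add: s_def lead_coeff_mult degree_monom_eq c_def)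
    define p' where "p' = p - s * m"
    have p'E: "pover E p'" unfolding p'_def using sE less.prems assms(2) by simp
    have "p' = 0 \<or> degree p' < degree p"
    proof (cases "p' = 0")
      case False
      have "degree p' \<le> degree p" unfolding p'_def using ds by (metis degree_diff_le order_refl)
      moreover have "coeff p' (degree p) = 0" unfolding p'_def using ls ds by simp
      ultimately show ?thesis using False degree_less_if_less_eqI by blast
    qed simp
    then show ?thesis
    proof
      assume "p' = 0"
      then show ?thesis using sE by (intro exI[of _ s] exI[of _ 0]) (auto simp: p'_def)
    next
      assume "degree p' < degree p"
      from less.hyps[OF this p'E] obtain q r where
        "pover E q" "pover E r" "p' = q * m + r" "r = 0 \<or> degree r < degree m" by blast
      then show ?thesis using sE
        by (intro exI[of _ "q + s"] exI[of _ r]) (auto simp: p'_def algebra_simps)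
    qed
  qed
qed

end


definition minp :: "'c::field set \<Rightarrow> 'c \<Rightarrow> 'c poly \<Rightarrow> bool" where
  "minp E \<gamma> m \<longleftrightarrow> pover E m \<and> lead_coeff m = 1 \<and> poly m \<gamma> = 0 \<and>
     (\<forall>p. pover E p \<and> poly p \<gamma> = 0 \<longrightarrow> (\<exists>h. pover E h \<and> p = m * h))"

definition adj :: "'c::field set \<Rightarrow> 'c \<Rightarrow> 'c set" where
  "adj E \<gamma> = (\<lambda>p. poly p \<gamma>) ` {p. pover E p}"

lemma minp_nz: "minp E \<gamma> m \<Longrightarrow> m \<noteq> 0"
  by (auto simp: minp_def)

lemma minp_deg: "minp E \<gamma> m \<Longrightarrow> degree m > 0"
proof (rule ccontr)
  assume m: "minp E \<gamma> m" and "\<not> degree m > 0"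
  then have "degree m = 0" by simp
  then have "m = [:lead_coeff m:]" by (metis degree_0_id)
  moreover have "lead_coeff m = 1" using m by (simp add: minp_def)
  ultimately have "poly m \<gamma> = 1" by (metis poly_pCons mult_zero_right add.right_neutral poly_0)
  then show False using m by (simp add: minp_def)
qed

context fixes E :: "'c::field set" assumes sf: "is_subfield E"
begin

lemma minp_degle:
  assumes "minp E \<gamma> m" "pover E p" "p \<noteq> 0" "poly p \<gamma> = 0"
  shows "degree m \<le> degree p"
proof -
  obtain h where "pover E h" "p = m * h" using assms unfolding minp_def by blast
  moreover have "m \<noteq> 0" "h \<noteq> 0" using assms(1,3) \<open>p = m * h\<close> minp_nz by auto
  ultimately show ?thesis by (simp add: degree_mult_eq)
qed

lemma minpoly_exists:
  assumes F: "pover E F" "F \<noteq> 0" "poly F \<gamma> = 0"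
  shows "\<exists>m. minp E \<gamma> m"
proof -
  define S where "S = {p. pover E p \<and> p \<noteq> 0 \<and> poly p \<gamma> = 0}"
  have "F \<in> S" using F by (simp add: S_def)
  define d where "d = (LEAST n. \<exists>p\<in>S. degree p = n)"
  have "\<exists>p\<in>S. degree p = d" unfolding d_def by (rule LeastI[of _ "degree F"]) (use \<open>F \<in> S\<close> in blast)
  then obtain m0 where m0: "m0 \<in> S" "degree m0 = d" by blast
  have dmin: "d \<le> degree p" if "p \<in> S" for p unfolding d_def by (rule Least_le) (use that in blast)
  define m where "m = Polynomial.smult (inverse (lead_coeff m0)) m0"
  have m0nz: "m0 \<noteq> 0" and m0E: "pover E m0" and m0r: "poly m0 \<gamma> = 0" using m0 by (auto simp: S_def)
  have mE: "pover E m" unfolding m_def using m0E lead_in[OF sf] by (simp add: pover_smult[OF sf] sf_inverse[OF sf])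
  have ml: "lead_coeff m = 1" unfolding m_def using m0nz by simp
  have mr: "poly m \<gamma> = 0" unfolding m_def using m0r by simp
  have "lead_coeff m0 \<noteq> 0" using m0nz by simp
  then have dm: "degree m = d" unfolding m_def using m0 by (simp add: degree_smult_eq)
  have "\<exists>h. pover E h \<and> p = m * h" if p: "pover E p" "poly p \<gamma> = 0" for p
  proof -
    have "m \<noteq> 0" using ml by auto
    from division_exists[OF sf p(1) mE this] obtain q r where
      qr: "pover E q" "pover E r" "p = q * m + r" "r = 0 \<or> degree r < degree m" by blast
    have "poly p \<gamma> = poly q \<gamma> * poly m \<gamma> + poly r \<gamma>" using qr(3) by simp
    then have "poly r \<gamma> = 0" using p(2) mr by simp
    have "r = 0"
    proof (rule ccontr)
      assume "r \<noteq> 0"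
      then have "r \<in> S" using qr(2) \<open>poly r \<gamma> = 0\<close> by (simp add: S_def)
      then show False using dmin[of r] qr(4) dm \<open>r \<noteq> 0\<close> by auto
    qed
    then show ?thesis using qr by (intro exI[of _ q]) (simp add: mult.commute)
  qed
  then show ?thesis using mE ml mr unfolding minp_def by blast
qed

lemma adj_sub: "E \<subseteq> adj E \<gamma>"
proof
  fix x assume "x \<in> E"
  then have "poly [:x:] \<gamma> = x" "pover E [:x:]" using pover_const[OF sf] by auto
  then show "x \<in> adj E \<gamma>" unfolding adj_def by (metis (mono_tags) image_eqI mem_Collect_eq)
qed

lemma adj_gen: "\<gamma> \<in> adj E \<gamma>"
proof -
  have "poly [:0, 1:] \<gamma> = \<gamma>" "pover E [:0, 1:]" using pover_1[OF sf] pover_pCons[OF sf] sf_0[OF sf] sf_1[OF sf] by auto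
  then show ?thesis unfolding adj_def by (metis (mono_tags) image_eqI mem_Collect_eq)
qed

lemma pover_mono: "pover E p \<Longrightarrow> E \<subseteq> T \<Longrightarrow> pover T p"
  by (auto simp: pover_def)

lemma adj_least: "is_subfield T \<Longrightarrow> E \<subseteq> T \<Longrightarrow> \<gamma> \<in> T \<Longrightarrow> adj E \<gamma> \<subseteq> T"
  unfolding adj_def using poly_in pover_mono by blast

lemma adj_subfield:
  assumes mp: "minp E \<gamma> m"
  shows "is_subfield (adj E \<gamma>)"
proof -
  let ?A = "adj E \<gamma>"
  have mem: "poly p \<gamma> \<in> ?A" if "pover E p" for p using that unfolding adj_def by blast
  have memE: "\<exists>p. pover E p \<and> y = poly p \<gamma>" if "y \<in> ?A" for y using that unfolding adj_def by blast
  have mE: "pover E m" and mnz: "m \<noteq> 0" and mr: "poly m \<gamma> = 0" using mp minp_nz[OF mp] by (auto simp: minp_def)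
  have inv: "inverse y \<in> ?A" if "y \<in> ?A" for y
  proof (cases "y = 0")
    case True then show ?thesis using mem[of 0] by (simp add: pover_0[OF sf])
  next
    case False
    from memE[OF that] obtain p where p: "pover E p" "y = poly p \<gamma>" by blast
    define I where "I = {w. \<exists>u v. pover E u \<and> pover E v \<and> w = u * p + v * m}"
    have mI: "m \<in> I" unfolding I_def using p mE by (intro CollectI exI[of _ 0] exI[of _ 1]) (auto simp: pover_0[OF sf] pover_1[OF sf])
    define d where "d = (LEAST n. \<exists>w\<in>I. w \<noteq> 0 \<and> degree w = n)"
    have "\<exists>w\<in>I. w \<noteq> 0 \<and> degree w = d" unfolding d_def by (rule LeastI[of _ "degree m"]) (use mI mnz in blast)
    then obtain w where w: "w \<in> I" "w \<noteq> 0" "degree w = d" by blast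
    have dmin: "d \<le> degree w'" if "w' \<in> I" "w' \<noteq> 0" for w' unfolding d_def by (rule Least_le) (use that in blast)
    from w(1) obtain u v where uv: "pover E u" "pover E v" "w = u * p + v * m" unfolding I_def by blast
    have wE: "pover E w" using uv by (simp add: pover_add[OF sf] pover_mult[OF sf] p mE)
    have divides: "\<exists>Q. pover E Q \<and> z = Q * w" if z: "z \<in> I" for z
    proof -
      from z obtain u' v' where uv': "pover E u'" "pover E v'" "z = u' * p + v' * m" unfolding I_def by blast
      have zE: "pover E z" using uv' by (simp add: pover_add[OF sf] pover_mult[OF sf] p mE)
      from division_exists[OF sf zE wE w(2)] obtain Q r where
        Qr: "pover E Q" "pover E r" "z = Q * w + r" "r = 0 \<or> degree r < degree w" by blast
      have "r = (u' - Q * u) * p + (v' - Q * v) * m" using Qr(3) uv' uv by (simp add: algebra_simps)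
      moreover have "pover E (u' - Q * u)" "pover E (v' - Q * v)"
        using uv uv' Qr by (simp_all add: pover_diff[OF sf] pover_mult[OF sf])
      ultimately have "r \<in> I" unfolding I_def by blast
      have "r = 0"
      proof (rule ccontr)
        assume "r \<noteq> 0"
        then show False using dmin[OF \<open>r \<in> I\<close>] Qr(4) w(3) by simp
      qed
      then show ?thesis using Qr by auto
    qed
    have pI: "p \<in> I" unfolding I_def using p mE by (intro CollectI exI[of _ 1] exI[of _ 0]) (auto simp: pover_0[OF sf] pover_1[OF sf])
    obtain Q where Q: "pover E Q" "m = Q * w" using divides[OF mI] by blast
    obtain Q' where Q': "pover E Q'" "p = Q' * w" using divides[OF pI] by blast
    have wr: "poly w \<gamma> \<noteq> 0"
    proof
      assume "poly w \<gamma> = 0"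
      then have "poly p \<gamma> = 0" using Q' by simp
      then show False using p False by simp
    qed
    have "poly Q \<gamma> = 0" using Q mr wr by simp
    moreover have "Q \<noteq> 0" using Q mnz by auto
    ultimately have "degree m \<le> degree Q" using minp_degle[OF mp Q(1)] by blast
    moreover have "degree m = degree Q + degree w" using Q mnz by (simp add: degree_mult_eq)
    ultimately have "degree w = 0" by simp
    then have wc: "w = [:coeff w 0:]" by (metis degree_0_id)
    define c where "c = coeff w 0"
    have c0: "c \<noteq> 0" using w(2) wc c_def by auto
    have cE: "c \<in> E" using wE by (simp add: c_def pover_def)
    have "poly w \<gamma> = poly u \<gamma> * poly p \<gamma> + poly v \<gamma> * poly m \<gamma>" using uv(3) by simp
    moreover have "poly w \<gamma> = c" using wc c_def by (metis poly_pCons mult_zero_right add.right_neutral poly_0)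
    ultimately have "c = poly u \<gamma> * y" using mr p(2) by simp
    then have "inverse y = poly (Polynomial.smult (inverse c) u) \<gamma>" using c0 False by (simp add: field_simps)
    moreover have "pover E (Polynomial.smult (inverse c) u)" using cE uv by (simp add: pover_smult[OF sf] sf_inverse[OF sf])
    moreover have "poly (Polynomial.smult (inverse c) u) \<gamma> \<in> adj E \<gamma>" by (rule mem) fact
    ultimately show ?thesis by simp
  qed
  show ?thesis unfolding is_subfield_def
  proof (intro conjI ballI)
    show "0 \<in> ?A" using mem[of 0] by (simp add: pover_0[OF sf])
    show "1 \<in> ?A" using mem[of 1] by (simp add: pover_1[OF sf])
    fix x y assume "x \<in> ?A" "y \<in> ?A"
    then obtain p1 p2 where "pover E p1" "x = poly p1 \<gamma>" "pover E p2" "y = poly p2 \<gamma>" using memE by metis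
    then show "x + y \<in> ?A" "x * y \<in> ?A"
      using mem[of "p1 + p2"] mem[of "p1 * p2"] by (simp_all add: pover_add[OF sf] pover_mult[OF sf])
  next
    fix x assume "x \<in> ?A"
    then obtain p1 where "pover E p1" "x = poly p1 \<gamma>" using memE by metis
    then show "- x \<in> ?A" using mem[of "- p1"] by (simp add: pover_uminus[OF sf])
    show "inverse x \<in> ?A" by (rule inv) fact
  qed
qed

lemma extend:
  assumes hm: "homo E \<tau>" and mp: "minp E \<gamma> m" and \<delta>: "poly (map_poly \<tau> m) \<delta> = 0"
  shows "\<exists>\<tau>'. homo (adj E \<gamma>) \<tau>' \<and> (\<forall>x\<in>E. \<tau>' x = \<tau> x) \<and> \<tau>' \<gamma> = \<delta> \<and>
           (\<forall>p. pover E p \<longrightarrow> \<tau>' (poly p \<gamma>) = poly (map_poly \<tau> p) \<delta>)"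
proof -
  have mE: "pover E m" using mp by (simp add: minp_def)
  have wd: "poly (map_poly \<tau> p1) \<delta> = poly (map_poly \<tau> p2) \<delta>"
    if "pover E p1" "pover E p2" "poly p1 \<gamma> = poly p2 \<gamma>" for p1 p2
  proof -
    have "pover E (p1 - p2)" "poly (p1 - p2) \<gamma> = 0" using that by (simp_all add: pover_diff[OF sf])
    then obtain h where h: "pover E h" "p1 - p2 = m * h" using mp unfolding minp_def by blast
    have "map_poly \<tau> p1 - map_poly \<tau> p2 = map_poly \<tau> m * map_poly \<tau> h"
      using mp_diff[OF sf hm that(1,2)] mp_mult[OF sf hm mE h(1)] h(2) by simp
    then have "poly (map_poly \<tau> p1) \<delta> - poly (map_poly \<tau> p2) \<delta> = 0" using \<delta>
      by (metis mult_zero_left poly_diff poly_mult)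
    then show ?thesis by simp
  qed
  define \<tau>' where "\<tau>' y = poly (map_poly \<tau> (SOME p. pover E p \<and> poly p \<gamma> = y)) \<delta>" for y
  have ev: "\<tau>' (poly p \<gamma>) = poly (map_poly \<tau> p) \<delta>" if "pover E p" for p
  proof -
    have "\<exists>p'. pover E p' \<and> poly p' \<gamma> = poly p \<gamma>" using that by blast
    then have "pover E (SOME p'. pover E p' \<and> poly p' \<gamma> = poly p \<gamma>) \<and> poly (SOME p'. pover E p' \<and> poly p' \<gamma> = poly p \<gamma>) \<gamma> = poly p \<gamma>"
      by (rule someI_ex)
    then show ?thesis unfolding \<tau>'_def using wd that by blast
  qed
  have memE: "\<exists>p. pover E p \<and> y = poly p \<gamma>" if "y \<in> adj E \<gamma>" for y using that unfolding adj_def by blast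
  have "homo (adj E \<gamma>) \<tau>'" unfolding homo_def
  proof (intro conjI ballI)
    have "map_poly \<tau> 1 = 1" using hom1[OF sf hm] by simp
    then show "\<tau>' 1 = 1" using ev[of 1] pover_1[OF sf] by simp
    fix x y assume "x \<in> adj E \<gamma>" "y \<in> adj E \<gamma>"
    then obtain p1 p2 where p: "pover E p1" "x = poly p1 \<gamma>" "pover E p2" "y = poly p2 \<gamma>" using memE by metis
    show "\<tau>' (x + y) = \<tau>' x + \<tau>' y"
      using ev[of "p1 + p2"] ev[of p1] ev[of p2] p mp_add[OF sf hm p(1) p(3)] by (simp add: pover_add[OF sf])
    show "\<tau>' (x * y) = \<tau>' x * \<tau>' y"
      using ev[of "p1 * p2"] ev[of p1] ev[of p2] p mp_mult[OF sf hm p(1) p(3)] by (simp add: pover_mult[OF sf])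
  qed
  moreover have "\<forall>x\<in>E. \<tau>' x = \<tau> x"
  proof
    fix x assume "x \<in> E"
    then show "\<tau>' x = \<tau> x" using ev[of "[:x:]"] mp_const[OF sf hm] by (simp add: pover_const[OF sf])
  qed
  moreover have "\<tau>' \<gamma> = \<delta>"
    using ev[of "[:0, 1:]"] mp_x[OF sf hm] pover_pCons[OF sf] pover_1[OF sf] sf_0[OF sf] by simp
  ultimately show ?thesis using ev by blast
qed

end

lemma root_of_factor:
  fixes M :: "'c::field poly"
  assumes "M dvd Polynomial.smult c (\<Prod>r\<leftarrow>rs. [:-r, 1:])" "c \<noteq> 0" "degree M > 0"
  shows "\<exists>r\<in>set rs. poly M r = 0"
  using assms(1)
proof (induction rs)
  case Nil
  then have "M dvd [:c:]" by simp
  then have "degree M \<le> 0" using assms(2) by (metis dvd_imp_degree_le pCons_eq_0_iff degree_pCons_0)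
  then show ?case using assms(3) by simp
next
  case (Cons r rs)
  show ?case
  proof (cases "poly M r = 0")
    case True then show ?thesis by simp
  next
    case False
    from Cons.prems obtain N where N: "Polynomial.smult c (\<Prod>r\<leftarrow>r # rs. [:-r, 1:]) = M * N" unfolding dvd_def by blast
    have "poly (Polynomial.smult c (\<Prod>r\<leftarrow>r # rs. [:-r, 1:])) r = 0" by simp
    then have "poly M r * poly N r = 0" unfolding N by simp
    then have "poly N r = 0" using False by simp
    then obtain N' where N': "N = [:-r, 1:] * N'" by (metis poly_eq_0_iff_dvd dvdE)
    have "[:-r, 1:] * Polynomial.smult c (\<Prod>r\<leftarrow>rs. [:-r, 1:]) = [:-r, 1:] * (M * N')"
      using N N' by (simp add: algebra_simps)
    moreover have nz: "[:-r, 1::'c:] \<noteq> 0" by simp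
    ultimately have "Polynomial.smult c (\<Prod>r\<leftarrow>rs. [:-r, 1:]) = M * N'" using mult_left_cancel[OF nz] by blast
    then have "M dvd Polynomial.smult c (\<Prod>r\<leftarrow>rs. [:-r, 1:])" by simp
    then show ?thesis using Cons.IH by auto
  qed
qed


lemma gen_sf: "is_subfield (gen_subfield A)"
  unfolding gen_subfield_def is_subfield_def by blast

lemma gen_sub: "A \<subseteq> gen_subfield A"
  unfolding gen_subfield_def by blast

lemma gen_least: "is_subfield T \<Longrightarrow> A \<subseteq> T \<Longrightarrow> gen_subfield A \<subseteq> T"
  unfolding gen_subfield_def by blast

lemma homo_id: "homo E (\<lambda>x. x)"
  by (simp add: homo_def)

lemma image_sf:
  assumes sf: "is_subfield K" and hm: "homo K \<sigma>"
  shows "is_subfield (\<sigma> ` K)"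
  unfolding is_subfield_def
proof (intro conjI ballI)
  show "0 \<in> \<sigma> ` K" using hom0[OF sf hm] sf_0[OF sf] by (metis image_eqI)
  show "1 \<in> \<sigma> ` K" using hom1[OF sf hm] sf_1[OF sf] by (metis image_eqI)
  fix x y assume "x \<in> \<sigma> ` K" "y \<in> \<sigma> ` K"
  then obtain a b where ab: "a \<in> K" "b \<in> K" "x = \<sigma> a" "y = \<sigma> b" by blast
  show "x + y \<in> \<sigma> ` K" using ab hom_add[OF sf hm ab(1,2)] sf_add[OF sf ab(1,2)] by (metis image_eqI)
  show "x * y \<in> \<sigma> ` K" using ab hom_mult[OF sf hm ab(1,2)] sf_mult[OF sf ab(1,2)] by (metis image_eqI)
next
  fix x assume "x \<in> \<sigma> ` K"
  then obtain a where a: "a \<in> K" "x = \<sigma> a" by blast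
  show "- x \<in> \<sigma> ` K" using a hom_uminus[OF sf hm a(1)] sf_uminus[OF sf a(1)] by (metis image_eqI)
  show "inverse x \<in> \<sigma> ` K" using a hom_inverse[OF sf hm a(1)] sf_inverse[OF sf a(1)] by (metis image_eqI)
qed

lemma preimage_sf:
  assumes sf: "is_subfield K" and hm: "homo K \<sigma>" and T: "is_subfield T"
  shows "is_subfield {x\<in>K. \<sigma> x \<in> T}"
  unfolding is_subfield_def
proof (intro conjI ballI)
  show "0 \<in> {x \<in> K. \<sigma> x \<in> T}" using sf_0[OF sf] sf_0[OF T] hom0[OF sf hm] by simp
  show "1 \<in> {x \<in> K. \<sigma> x \<in> T}" using sf_1[OF sf] sf_1[OF T] hom1[OF sf hm] by simp
  fix x y assume x: "x \<in> {x \<in> K. \<sigma> x \<in> T}" and y: "y \<in> {x \<in> K. \<sigma> x \<in> T}"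
  then have xy: "x \<in> K" "y \<in> K" "\<sigma> x \<in> T" "\<sigma> y \<in> T" by auto
  show "x + y \<in> {x \<in> K. \<sigma> x \<in> T}"
    using xy sf_add[OF sf xy(1,2)] hom_add[OF sf hm xy(1,2)] sf_add[OF T xy(3,4)] by simp
  show "x * y \<in> {x \<in> K. \<sigma> x \<in> T}"
    using xy sf_mult[OF sf xy(1,2)] hom_mult[OF sf hm xy(1,2)] sf_mult[OF T xy(3,4)] by simp
next
  fix x assume x: "x \<in> {x \<in> K. \<sigma> x \<in> T}"
  then have xx: "x \<in> K" "\<sigma> x \<in> T" by auto
  show "- x \<in> {x \<in> K. \<sigma> x \<in> T}"
    using xx sf_uminus[OF sf xx(1)] hom_uminus[OF sf hm xx(1)] sf_uminus[OF T xx(2)] by simp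
  show "inverse x \<in> {x \<in> K. \<sigma> x \<in> T}"
    using xx sf_inverse[OF sf xx(1)] hom_inverse[OF sf hm xx(1)] sf_inverse[OF T xx(2)] by simp
qed

lemma mp_fix:
  assumes "pover k F" "\<forall>x\<in>k. \<tau> x = x"
  shows "map_poly \<tau> F = F"
proof -
  have "coeff F (Suc (degree F)) = 0" by (rule coeff_eq_0) simp
  then have "0 \<in> k" using assms(1) unfolding pover_def by metis
  then have "\<tau> 0 = 0" using assms(2) by simp
  then show ?thesis using assms by (intro poly_eqI) (simp add: coeff_map_poly pover_def)
qed

locale split_setup =
  fixes k :: "'c::field set" and F :: "'c poly" and c :: 'c and rs :: "'c list"
  assumes sfk: "is_subfield k" and Fk: "pover k F" and Fsplit: "F = Polynomial.smult c (\<Prod>r\<leftarrow>rs. [:-r, 1:])"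
    and c0: "c \<noteq> 0"
begin

lemma F_nz: "F \<noteq> 0"
  unfolding Fsplit using c0 by (auto simp: prod_list_zero_iff)

lemma roots_F: "{x. poly F x = 0} = set rs"
  unfolding Fsplit using c0 by (auto simp: poly_prod_list_zero_iff)

lemma iter:
  assumes "is_subfield E" "k \<subseteq> E" "homo E \<tau>" "\<forall>x\<in>k. \<tau> x = x" "set xs \<subseteq> set rs"
  shows "\<exists>E' \<tau>'. is_subfield E' \<and> E \<subseteq> E' \<and> set xs \<subseteq> E' \<and> homo E' \<tau>' \<and> (\<forall>x\<in>E. \<tau>' x = \<tau> x) \<and>
            (\<forall>T. is_subfield T \<and> E \<subseteq> T \<and> set xs \<subseteq> T \<longrightarrow> E' \<subseteq> T)"
  using assms
proof (induction xs arbitrary: E \<tau>)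
  case Nil
  then show ?case by (intro exI[of _ E] exI[of _ \<tau>]) auto
next
  case (Cons x xs)
  note sf = Cons.prems(1)
  have FE: "pover E F" using Fk Cons.prems(2) by (auto simp: pover_def)
  have Fx: "poly F x = 0" using Cons.prems(5) roots_F by auto
  obtain m where mp: "minp E x m" using minpoly_exists[OF sf FE F_nz Fx] by blast
  have mE: "pover E m" using mp by (simp add: minp_def)
  obtain h where h: "pover E h" "F = m * h" using mp FE Fx unfolding minp_def by blast
  have "map_poly \<tau> F = F" by (rule mp_fix[OF Fk Cons.prems(4)])
  then have "F = map_poly \<tau> m * map_poly \<tau> h" using mp_mult[OF sf Cons.prems(3) mE h(1)] h(2) by simp
  then have dv: "map_poly \<tau> m dvd Polynomial.smult c (\<Prod>r\<leftarrow>rs. [:-r, 1:])" using Fsplit by (metis dvd_triv_left)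
  have "coeff (map_poly \<tau> m) (degree m) = 1"
    using mp hom1[OF sf Cons.prems(3)] coeff_mp[OF sf Cons.prems(3)] by (simp add: minp_def)
  then have "degree m \<le> degree (map_poly \<tau> m)" by (metis le_degree one_neq_zero)
  then have "degree (map_poly \<tau> m) > 0" using minp_deg[OF mp] by simp
  from root_of_factor[OF dv c0 this] obtain \<delta> where \<delta>: "poly (map_poly \<tau> m) \<delta> = 0" by blast
  from extend[OF sf Cons.prems(3) mp \<delta>] obtain \<tau>1 where
    t1: "homo (adj E x) \<tau>1" "\<forall>y\<in>E. \<tau>1 y = \<tau> y" by blast
  have sf1: "is_subfield (adj E x)" by (rule adj_subfield[OF sf mp])
  have kE1: "k \<subseteq> adj E x" using Cons.prems(2) adj_sub[OF sf] by blast
  have fix1: "\<forall>y\<in>k. \<tau>1 y = y" using t1(2) Cons.prems(2,4) by auto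
  from Cons.IH[OF sf1 kE1 t1(1) fix1] Cons.prems(5) obtain E' \<tau>' where
    IH: "is_subfield E'" "adj E x \<subseteq> E'" "set xs \<subseteq> E'" "homo E' \<tau>'" "\<forall>y\<in>adj E x. \<tau>' y = \<tau>1 y"
      "\<forall>T. is_subfield T \<and> adj E x \<subseteq> T \<and> set xs \<subseteq> T \<longrightarrow> E' \<subseteq> T" by auto
  show ?case
  proof (intro exI[of _ E'] exI[of _ \<tau>'] conjI allI impI)
    show "is_subfield E'" "homo E' \<tau>'" by fact+
    show "E \<subseteq> E'" using IH(2) adj_sub[OF sf] by blast
    show "set (x # xs) \<subseteq> E'" using IH(2,3) adj_gen[OF sf] by auto
    show "\<forall>y\<in>E. \<tau>' y = \<tau> y" using IH(5) t1(2) adj_sub[OF sf, of x] by auto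
    fix T assume T: "is_subfield T \<and> E \<subseteq> T \<and> set (x # xs) \<subseteq> T"
    then have "adj E x \<subseteq> T" using adj_least[OF sf] by auto
    then show "E' \<subseteq> T" using IH(6) T by auto
  qed
qed

definition "KK = gen_subfield (k \<union> {x. poly F x = 0})"

lemma KK_sf: "is_subfield KK" unfolding KK_def by (rule gen_sf)
lemma k_KK: "k \<subseteq> KK" and rs_KK: "set rs \<subseteq> KK"
  using gen_sub[of "k \<union> {x. poly F x = 0}"] roots_F unfolding KK_def by auto

lemma autom:
  assumes mp: "minp k \<alpha> m" and \<alpha>: "poly F \<alpha> = 0" and \<beta>: "poly m \<beta> = 0"
  shows "\<exists>\<sigma>. homo KK \<sigma> \<and> (\<forall>x\<in>k. \<sigma> x = x) \<and> \<sigma> \<alpha> = \<beta> \<and> bij_betw \<sigma> KK KK"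
proof -
  have "map_poly (\<lambda>x. x) m = m" by simp
  then have \<beta>': "poly (map_poly (\<lambda>x. x) m) \<beta> = 0" using \<beta> by simp
  from extend[OF sfk homo_id mp \<beta>'] obtain \<tau>1 where
    t1: "homo (adj k \<alpha>) \<tau>1" "\<forall>y\<in>k. \<tau>1 y = y" "\<tau>1 \<alpha> = \<beta>" by auto
  have sf1: "is_subfield (adj k \<alpha>)" by (rule adj_subfield[OF sfk mp])
  from iter[OF sf1 adj_sub[OF sfk] t1(1,2) order_refl] obtain E' \<sigma> where
    E'all: "is_subfield E' \<and> adj k \<alpha> \<subseteq> E' \<and> set rs \<subseteq> E' \<and> homo E' \<sigma> \<and> (\<forall>x\<in>adj k \<alpha>. \<sigma> x = \<tau>1 x) \<and>
      (\<forall>T. is_subfield T \<and> adj k \<alpha> \<subseteq> T \<and> set rs \<subseteq> T \<longrightarrow> E' \<subseteq> T)" by (elim exE)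
  note E' = conjunct1[OF E'all] conjunct1[OF conjunct2[OF E'all]] conjunct1[OF conjunct2[OF conjunct2[OF E'all]]]
    conjunct1[OF conjunct2[OF conjunct2[OF conjunct2[OF E'all]]]]
    conjunct1[OF conjunct2[OF conjunct2[OF conjunct2[OF conjunct2[OF E'all]]]]]
    conjunct2[OF conjunct2[OF conjunct2[OF conjunct2[OF conjunct2[OF E'all]]]]]
  have \<alpha>K: "\<alpha> \<in> KK" using \<alpha> rs_KK roots_F by auto
  have "adj k \<alpha> \<subseteq> KK" using adj_least[OF sfk KK_sf k_KK \<alpha>K] .
  then have "E' \<subseteq> KK" using E'(6) KK_sf rs_KK by blast
  moreover have "KK \<subseteq> E'" unfolding KK_def
    using gen_least[OF E'(1), of "k \<union> {x. poly F x = 0}"] E'(2,3) adj_sub[OF sfk, of \<alpha>] roots_F by auto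
  ultimately have EK: "E' = KK" by blast
  have hm: "homo KK \<sigma>" using E'(4) EK by simp
  have fixk: "\<forall>x\<in>k. \<sigma> x = x" using E'(5) t1(2) adj_sub[OF sfk, of \<alpha>] by auto
  have sa: "\<sigma> \<alpha> = \<beta>" using E'(5) t1(3) adj_gen[OF sfk] by auto
  have inj: "inj_on \<sigma> KK" by (rule hom_inj[OF KK_sf hm])
  have FK: "pover KK F" using Fk k_KK by (auto simp: pover_def)
  have mpF: "map_poly \<sigma> F = F" by (rule mp_fix[OF Fk fixk])
  have rr: "\<sigma> ` set rs \<subseteq> set rs"
  proof
    fix y assume "y \<in> \<sigma> ` set rs"
    then obtain x where x: "x \<in> set rs" "y = \<sigma> x" by blast
    have "poly F y = \<sigma> (poly F x)" using poly_mp[OF KK_sf hm FK, of x] mpF x rs_KK by auto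
    also have "\<dots> = 0" using x(1) roots_F hom0[OF KK_sf hm] by (metis mem_Collect_eq)
    finally show "y \<in> set rs" using roots_F by auto
  qed
  have injr: "inj_on \<sigma> (set rs)" using inj rs_KK by (rule inj_on_subset)
  have rr2: "\<sigma> ` set rs = set rs"
    using card_subset_eq[OF finite_set rr] card_image[OF injr] by simp
  have isf: "is_subfield (\<sigma> ` KK)" by (rule image_sf[OF KK_sf hm])
  have kS: "k \<subseteq> \<sigma> ` KK"
  proof
    fix x assume "x \<in> k"
    then have "\<sigma> x = x" "x \<in> KK" using fixk k_KK by auto
    then show "x \<in> \<sigma> ` KK" by (metis image_eqI)
  qed
  have "set rs \<subseteq> \<sigma> ` KK" using rr2 rs_KK by blast
  then have "k \<union> {x. poly F x = 0} \<subseteq> \<sigma> ` KK" using kS roots_F by auto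
  then have "KK \<subseteq> \<sigma> ` KK" using gen_least[OF isf] unfolding KK_def by blast
  moreover have "k \<union> {x. poly F x = 0} \<subseteq> {x\<in>KK. \<sigma> x \<in> KK}"
    using fixk k_KK rs_KK rr roots_F by auto
  then have "KK \<subseteq> {x\<in>KK. \<sigma> x \<in> KK}"
    using gen_least[OF preimage_sf[OF KK_sf hm KK_sf]] unfolding KK_def by blast
  ultimately have "\<sigma> ` KK = KK" by blast
  then have "bij_betw \<sigma> KK KK" using inj by (simp add: bij_betw_def)
  then show ?thesis using hm fixk sa by blast
qed

end


definition GG :: "'c::field set \<Rightarrow> 'c set \<Rightarrow> ('c \<Rightarrow> 'c) set" where
  "GG K k = {\<sigma>. bij_betw \<sigma> K K \<and> (\<forall>x\<in>K. \<forall>y\<in>K. \<sigma> (x + y) = \<sigma> x + \<sigma> y \<and> \<sigma> (x * y) = \<sigma> x * \<sigma> y)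
     \<and> (\<forall>a\<in>k. \<sigma> a = a) \<and> (\<forall>x. x \<notin> K \<longrightarrow> \<sigma> x = x)}"

definition ginv :: "'c set \<Rightarrow> ('c \<Rightarrow> 'c) \<Rightarrow> 'c \<Rightarrow> 'c" where
  "ginv K \<sigma> x = (if x \<in> K then inv_into K \<sigma> x else x)"

lemma GG_comp:
  assumes "\<sigma> \<in> GG K k" "\<rho> \<in> GG K k"
  shows "\<sigma> \<circ> \<rho> \<in> GG K k"
proof -
  have b: "bij_betw \<sigma> K K" "bij_betw \<rho> K K" using assms by (auto simp: GG_def)
  have im: "\<rho> x \<in> K" if "x \<in> K" for x using b(2) that by (meson bij_betwE)
  show ?thesis using assms b(1,2) im unfolding GG_def
    by (auto intro: bij_betw_trans)
qed

lemma GG_inv: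
  assumes s: "\<sigma> \<in> GG K k" and kK: "k \<subseteq> K" and cl: "\<And>x y. x \<in> K \<Longrightarrow> y \<in> K \<Longrightarrow> x + y \<in> K \<and> x * y \<in> K"
  shows "ginv K \<sigma> \<in> GG K k" "ginv K \<sigma> \<circ> \<sigma> = id" "\<sigma> \<circ> ginv K \<sigma> = id"
proof -
  have b: "bij_betw \<sigma> K K" using s by (auto simp: GG_def)
  have out: "\<sigma> x = x" if "x \<notin> K" for x using s that by (auto simp: GG_def)
  have hom: "\<sigma> (x + y) = \<sigma> x + \<sigma> y" "\<sigma> (x * y) = \<sigma> x * \<sigma> y" if "x \<in> K" "y \<in> K" for x y
    using s that by (auto simp: GG_def)
  have fx: "\<sigma> a = a" if "a \<in> k" for a using s that by (auto simp: GG_def)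
  have inj: "inj_on \<sigma> K" and sur: "\<sigma> ` K = K" using b by (auto simp: bij_betw_def)
  have iK: "inv_into K \<sigma> x \<in> K" if "x \<in> K" for x using that sur by (metis inv_into_into)
  have fi: "\<sigma> (inv_into K \<sigma> x) = x" if "x \<in> K" for x using that sur by (simp add: f_inv_into_f)
  have if_: "inv_into K \<sigma> (\<sigma> x) = x" if "x \<in> K" for x using that inj by simp
  have bi: "bij_betw (inv_into K \<sigma>) K K" using bij_betw_inv_into[OF b] .
  have bi2: "bij_betw (ginv K \<sigma>) K K" using bi by (rule bij_betw_cong[THEN iffD1, rotated]) (simp add: ginv_def)
  show "ginv K \<sigma> \<in> GG K k" unfolding GG_def
  proof (intro CollectI conjI ballI allI impI)
    show "bij_betw (ginv K \<sigma>) K K" by fact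
    fix x y assume xy: "x \<in> K" "y \<in> K"
    have s1: "\<sigma> (inv_into K \<sigma> x + inv_into K \<sigma> y) = x + y" using hom(1)[OF iK iK] xy fi by simp
    have s2: "\<sigma> (inv_into K \<sigma> x * inv_into K \<sigma> y) = x * y" using hom(2)[OF iK iK] xy fi by simp
    have c1: "inv_into K \<sigma> x + inv_into K \<sigma> y \<in> K" "inv_into K \<sigma> x * inv_into K \<sigma> y \<in> K"
      using cl iK xy by auto
    show "ginv K \<sigma> (x + y) = ginv K \<sigma> x + ginv K \<sigma> y"
      using inv_into_f_eq[OF inj c1(1) s1] xy cl by (simp add: ginv_def)
    show "ginv K \<sigma> (x * y) = ginv K \<sigma> x * ginv K \<sigma> y"
      using inv_into_f_eq[OF inj c1(2) s2] xy cl by (simp add: ginv_def)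
  next
    fix a assume "a \<in> k"
    then show "ginv K \<sigma> a = a" using kK fx if_[of a] by (auto simp: ginv_def)
  next
    fix x assume "x \<notin> K" then show "ginv K \<sigma> x = x" by (simp add: ginv_def)
  qed
  show "ginv K \<sigma> \<circ> \<sigma> = id"
  proof
    fix x show "(ginv K \<sigma> \<circ> \<sigma>) x = id x"
      by (cases "x \<in> K") (auto simp: ginv_def out if_ bij_betwE[OF b])
  qed
  show "\<sigma> \<circ> ginv K \<sigma> = id"
  proof
    fix x show "(\<sigma> \<circ> ginv K \<sigma>) x = id x"
      by (cases "x \<in> K") (auto simp: ginv_def out fi)
  qed
qed

lemma orbit_count:
  assumes kK: "k \<subseteq> K" and cl: "\<And>x y. x \<in> K \<Longrightarrow> y \<in> K \<Longrightarrow> x + y \<in> K \<and> x * y \<in> K"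
    and \<alpha>K: "\<alpha> \<in> K" and finR: "finite R"
    and into: "\<And>\<sigma>. \<sigma> \<in> GG K k \<Longrightarrow> \<sigma> \<alpha> \<in> R"
    and trans: "\<And>\<beta>. \<beta> \<in> R \<Longrightarrow> \<exists>\<sigma>\<in>GG K k. \<sigma> \<alpha> = \<beta>"
  shows "card R dvd card (GG K k)"
proof (cases "finite (GG K k)")
  case False then show ?thesis by simp
next
  case True
  define Fib where "Fib \<beta> = {\<sigma>\<in>GG K k. \<sigma> \<alpha> = \<beta>}" for \<beta>
  have U: "GG K k = (\<Union>\<beta>\<in>R. Fib \<beta>)" using into unfolding Fib_def by auto
  have "card (GG K k) = (\<Sum>\<beta>\<in>R. card (Fib \<beta>))"
    unfolding U by (rule card_UN_disjoint) (use finR True in \<open>auto simp: Fib_def\<close>)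
  also have "\<dots> = (\<Sum>\<beta>\<in>R. card (Fib \<alpha>))"
  proof (rule sum.cong[OF refl])
    fix \<beta> assume "\<beta> \<in> R"
    from trans[OF this] obtain \<sigma> where s: "\<sigma> \<in> GG K k" "\<sigma> \<alpha> = \<beta>" by blast
    note gi = GG_inv[OF s(1) kK cl]
    have ia: "ginv K \<sigma> \<beta> = \<alpha>" using gi(2) s(2) by (metis comp_apply id_apply)
    have "bij_betw (\<lambda>\<rho>. \<sigma> \<circ> \<rho>) (Fib \<alpha>) (Fib \<beta>)"
    proof (rule bij_betw_byWitness[where f' = "\<lambda>\<rho>. ginv K \<sigma> \<circ> \<rho>"])
      show "\<forall>\<rho>\<in>Fib \<alpha>. ginv K \<sigma> \<circ> (\<sigma> \<circ> \<rho>) = \<rho>" using gi(2) by (simp add: comp_assoc[symmetric])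
      show "\<forall>\<rho>\<in>Fib \<beta>. \<sigma> \<circ> (ginv K \<sigma> \<circ> \<rho>) = \<rho>" using gi(3) by (simp add: comp_assoc[symmetric])
      show "(\<lambda>\<rho>. \<sigma> \<circ> \<rho>) ` Fib \<alpha> \<subseteq> Fib \<beta>" using s GG_comp unfolding Fib_def by auto
      show "(\<lambda>\<rho>. ginv K \<sigma> \<circ> \<rho>) ` Fib \<beta> \<subseteq> Fib \<alpha>" using gi(1) ia GG_comp unfolding Fib_def by auto
    qed
    then show "card (Fib \<beta>) = card (Fib \<alpha>)" by (simp add: bij_betw_same_card)
  qed
  also have "\<dots> = card R * card (Fib \<alpha>)" by simp
  finally show ?thesis by simp
qed


definition swp :: "'a::field poly poly \<Rightarrow> 'a poly poly" where
  "swp P = poly (map_poly (map_poly (\<lambda>e. [:e:])) P) [:[:0, 1:]:]"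

lemma coeff_swp: "coeff (coeff (swp P) j) k = coeff (coeff P k) j"
proof (induction P arbitrary: k rule: pCons_induct)
  case 0
  then show ?case by (simp add: swp_def)
next
  case (pCons c P)
  have mp: "map_poly (map_poly (\<lambda>e. [:e:])) (pCons c P) = pCons (map_poly (\<lambda>e. [:e:]) c) (map_poly (map_poly (\<lambda>e. [:e:])) P)"
    by (rule poly_eqI) (simp add: coeff_map_poly coeff_pCons split: nat.splits)
  have "swp (pCons c P) = map_poly (\<lambda>e. [:e:]) c + [:[:0, 1:]:] * swp P"
    unfolding swp_def mp by (simp only: poly_pCons)
  then show ?case by (cases k) (simp_all add: coeff_map_poly coeff_pCons pCons.IH)
qed

lemma swp_mult: "swp (A * B) = swp A * swp B"
proof -
  interpret m1: map_poly_comm_ring_hom "\<lambda>e::'a. [:e:]" by unfold_locales auto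
  interpret m2: map_poly_comm_ring_hom "map_poly (\<lambda>e::'a. [:e:])" by unfold_locales
  show ?thesis unfolding swp_def by (simp add: m2.hom_mult)
qed

lemma swp_eq_0: "swp A = 0 \<longleftrightarrow> A = 0"
proof
  assume "swp A = 0"
  then have "coeff (coeff A k) j = 0" for k j using coeff_swp[of A j k] by simp
  then show "A = 0" by (intro poly_eqI) (simp add: poly_eq_iff)
qed (simp add: swp_def)

lemma irr_bivar:
  fixes G :: "'a::field poly poly"
  assumes c0: "coeff G 0 = [:b, 1:]" and ck: "\<And>k. k > 0 \<Longrightarrow> degree (coeff G k) = 0"
    and dG: "degree G > 0"
  shows "irreducible G"
proof (rule irreducibleI)
  show "G \<noteq> 0" using dG by auto
  show "\<not> G dvd 1"
  proof
    assume "G dvd 1"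
    then have "degree G \<le> degree (1 :: 'a poly poly)" by (rule dvd_imp_degree_le) simp
    then show False using dG by simp
  qed
  fix A B assume GAB: "G = A * B"
  have cc: "coeff (coeff G k) j = (if j = 0 then coeff (coeff G k) 0 else if j = 1 \<and> k = 0 then 1 else 0)" for k j
  proof (cases "k = 0")
    case True then show ?thesis using c0 by (auto simp: coeff_pCons split: nat.splits)
  next
    case False
    then have "degree (coeff G k) = 0" using ck by simp
    then show ?thesis using False by (auto simp: coeff_eq_0)
  qed
  have s1: "coeff (swp G) 1 = 1"
    by (rule poly_eqI) (simp add: coeff_swp cc coeff_1)
  have s2: "coeff (swp G) j = 0" if "j > 1" for j
    by (rule poly_eqI) (use that in \<open>simp add: coeff_swp cc\<close>)
  have dsG: "degree (swp G) = 1"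
  proof (rule antisym)
    show "degree (swp G) \<le> 1" by (rule degree_le) (use s2 in auto)
    show "1 \<le> degree (swp G)" by (rule le_degree) (metis s1 one_neq_zero)
  qed
  have A0: "A \<noteq> 0" and B0: "B \<noteq> 0" using GAB \<open>G \<noteq> 0\<close> by auto
  have sA: "swp A \<noteq> 0" using A0 swp_eq_0[of A] by blast
  have sB: "swp B \<noteq> 0" using B0 swp_eq_0[of B] by blast
  have sG: "swp G = swp A * swp B" using GAB swp_mult by simp
  have dd: "degree (swp A) + degree (swp B) = 1" using dsG sG sA sB by (simp add: degree_mult_eq)
  have key: "P dvd 1" if sP: "swp P = [:u:]" and uw: "u * w = 1" for P :: "'a poly poly" and u w
  proof -
    have "degree u + degree w = 0" using uw by (metis degree_1 degree_mult_eq mult_zero_left mult_zero_right one_neq_zero)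
    then have "degree u = 0" by simp
    then have u': "u = [:coeff u 0:]" by (metis degree_0_id)
    define u0 where "u0 = coeff u 0"
    have u: "u = [:u0:]" using u' u0_def by simp
    have u0: "u0 \<noteq> 0" using uw u by (metis mult_zero_left pCons_eq_0_iff one_neq_zero)
    have "coeff (coeff P k) j = coeff (coeff [:[:u0:]:] k) j" for k j
    proof -
      have "coeff (coeff P k) j = coeff (coeff [:u:] j) k" using coeff_swp[of P j k] sP by simp
      also have "\<dots> = (if j = 0 \<and> k = 0 then u0 else 0)" unfolding u by (auto simp: coeff_pCons split: nat.splits)
      also have "\<dots> = coeff (coeff [:[:u0:]:] k) j" by (auto simp: coeff_pCons split: nat.splits)
      finally show ?thesis .
    qed
    then have "P = [:[:u0:]:]" by (intro poly_eqI) (simp add: poly_eq_iff)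
    moreover have "[:[:u0:]:] * [:[:inverse u0:]:] = [:[:1::'a:]:]" using u0 by simp
    moreover have "[:[:1::'a:]:] = 1" by (metis one_pCons)
    ultimately have "P * [:[:inverse u0:]:] = 1" by simp
    then show ?thesis by (metis dvdI)
  qed
  show "A dvd 1 \<or> B dvd 1"
  proof (cases "degree (swp A) = 0")
    case True
    then have sAc: "swp A = [:coeff (swp A) 0:]" by (metis degree_0_id)
    have "coeff (swp G) 1 = coeff (swp A) 0 * coeff (swp B) 1"
      by (subst sG, subst sAc) simp
    then have "coeff (swp A) 0 * coeff (swp B) 1 = 1" using s1 by simp
    then show ?thesis using key[OF sAc] by blast
  next
    case False
    then have "degree (swp B) = 0" using dd by simp
    then have sBc: "swp B = [:coeff (swp B) 0:]" by (metis degree_0_id)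
    have "coeff (swp G) 1 = coeff (swp A) 1 * coeff (swp B) 0"
      by (subst sG, subst sBc, subst mult.commute) simp
    then have "coeff (swp B) 0 * coeff (swp A) 1 = 1" using s1 by (simp add: mult.commute)
    then show ?thesis using key[OF sBc] by blast
  qed
qed


lemma swp_swp: "swp (swp P) = P"
  by (intro poly_eqI) (simp add: poly_eq_iff coeff_swp)

lemma clear_denoms:
  fixes A :: "'b::idom fract poly"
  shows "\<exists>c A0. c \<noteq> 0 \<and> map_poly to_fract A0 = Polynomial.smult (to_fract c) A"
proof (induction A rule: pCons_induct)
  case 0
  then show ?case by (intro exI[of _ 1] exI[of _ 0]) simp
next
  case (pCons a A)
  then obtain c A0 where cA: "c \<noteq> 0" "map_poly to_fract A0 = Polynomial.smult (to_fract c) A" by blast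
  obtain u v where a: "a = Fract u v" "v \<noteq> 0" by (cases a) auto
  have av: "to_fract v * a = to_fract u" using a by (simp add: Fract_conv_to_fract)
  define A0' where "A0' = pCons (c * u) (Polynomial.smult v A0)"
  have "map_poly to_fract A0' = pCons (to_fract (c * u)) (map_poly to_fract (Polynomial.smult v A0))"
    unfolding A0'_def by (rule poly_eqI) (simp add: coeff_map_poly coeff_pCons split: nat.splits)
  also have "\<dots> = Polynomial.smult (to_fract (c * v)) (pCons a A)"
    using cA av by (simp add: mult_ac)
  finally show ?case using cA a by (intro exI[of _ "c * v"] exI[of _ A0']) simp
qed

lemma swp_G:
  fixes P0 :: "'a::field poly"
  shows "swp (map_poly (\<lambda>c. [:c:]) P0 + [:[:0, 1:]:]) = [:P0, 1:]"
proof (intro poly_eqI)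
  fix j k
  show "coeff (coeff (swp (map_poly (\<lambda>c. [:c:]) P0 + [:[:0, 1:]:])) j) k = coeff (coeff [:P0, 1:] j) k"
    unfolding coeff_swp
    by (cases j; cases k) (auto simp: coeff_map_poly coeff_pCons split: nat.splits)
qed

lemma ev_mult: "poly (swp (A * B)) r = poly (swp A) r * poly (swp B) r"
  by (simp add: swp_mult)

lemma one_side:
  fixes P0 :: "'a::field poly" and A0 B0 :: "'a poly poly"
  defines "G \<equiv> map_poly (\<lambda>c. [:c:]) P0 + [:[:0, 1:]:]"
  assumes eq: "A0 * B0 = Polynomial.smult c G" and c0: "c \<noteq> 0"
    and ev: "poly (swp A0) (- P0) = 0"
  shows "degree B0 = 0"
proof -
  have "[:- (- P0), 1:] dvd swp A0" using ev by (simp only: poly_eq_0_iff_dvd)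
  then obtain D where D: "swp A0 = [:P0, 1:] * D" by (auto elim: dvdE)
  have "swp A0 = swp (G * swp D)" unfolding swp_mult swp_swp G_def swp_G D ..
  then have A0: "A0 = G * swp D" by (metis swp_swp)
  have Gnz: "G \<noteq> 0"
  proof
    assume "G = 0"
    then have "swp G = 0" by (simp add: swp_eq_0)
    then show False unfolding G_def swp_G by simp
  qed
  have "G * (swp D * B0) = G * [:c:]" using eq A0 by (simp add: mult_ac)
  then have "swp D * B0 = [:c:]" using mult_left_cancel[OF Gnz] by blast
  then have "degree (swp D * B0) = 0" by simp
  moreover have "swp D \<noteq> 0" "B0 \<noteq> 0" using \<open>swp D * B0 = [:c:]\<close> c0 by auto
  ultimately show ?thesis by (simp add: degree_mult_eq)
qed

lemma irr_frac:
  fixes P0 :: "'a::field poly"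
  defines "G \<equiv> map_poly (\<lambda>c. [:c:]) P0 + [:[:0, 1:]:]"
  assumes dG: "degree G > 0"
  shows "irreducible (map_poly to_fract G)"
proof (rule irreducibleI)
  show g0: "map_poly to_fract G \<noteq> 0" using dG by auto
  show "\<not> map_poly to_fract G dvd 1" using dG by (simp add: is_unit_iff_degree)
  fix A B assume AB: "map_poly to_fract G = A * B"
  then have A0: "A \<noteq> 0" and B0: "B \<noteq> 0" using g0 by auto
  obtain cA A0 where cA: "cA \<noteq> 0" "map_poly to_fract A0 = Polynomial.smult (to_fract cA) A" using clear_denoms by blast
  obtain cB B0 where cB: "cB \<noteq> 0" "map_poly to_fract B0 = Polynomial.smult (to_fract cB) B" using clear_denoms by blast
  have "map_poly to_fract (A0 * B0) = map_poly to_fract (Polynomial.smult (cA * cB) G)"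
    using cA cB AB by (simp add: mult_ac)
  then have eq: "A0 * B0 = Polynomial.smult (cA * cB) G" by (simp only: fract_poly_eq_iff)
  have c0: "cA * cB \<noteq> 0" using cA cB by simp
  have evG: "poly (swp G) (- P0) = 0" unfolding G_def swp_G by simp
  have sm: "Polynomial.smult (cA * cB) G = [:cA * cB:] * G" by simp
  have "poly (swp (A0 * B0)) (- P0) = 0"
    unfolding eq sm ev_mult evG by simp
  then have "poly (swp A0) (- P0) = 0 \<or> poly (swp B0) (- P0) = 0" by (simp add: ev_mult)
  then show "A dvd 1 \<or> B dvd 1"
  proof
    assume "poly (swp A0) (- P0) = 0"
    then have "degree B0 = 0" using one_side[OF eq[unfolded G_def] c0] by blast
    then have "degree B = 0" using cB by (metis degree_smult_eq to_fract_eq_0_iff to_fract_hom.degree_map_poly_hom)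
    then show ?thesis using B0 by (simp add: is_unit_iff_degree)
  next
    assume "poly (swp B0) (- P0) = 0"
    have eq': "B0 * A0 = Polynomial.smult (cA * cB) G" using eq by (simp add: mult.commute)
    then have "degree A0 = 0" using one_side[OF eq'[unfolded G_def] c0] \<open>poly (swp B0) (- P0) = 0\<close> by blast
    then have "degree A = 0" using cA by (metis degree_smult_eq to_fract_eq_0_iff to_fract_hom.degree_map_poly_hom)
    then show ?thesis using A0 by (simp add: is_unit_iff_degree)
  qed
qed


lemma card_ge2: "card (UNIV :: 'a::finite_field set) \<ge> 2"
proof -
  have "card {0, 1::'a} \<le> card (UNIV :: 'a set)" by (rule card_mono) auto
  then show ?thesis by simp
qed

lemma of_nat_card0: "of_nat (card (UNIV :: 'a::finite_field set)) = (0 :: 'a)"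
proof -
  have "(\<Sum>x\<in>(UNIV::'a set). x + 1) = (\<Sum>x\<in>(UNIV::'a set). x)"
    by (rule sum.reindex_bij_witness[of _ "\<lambda>x. x - 1" "\<lambda>x. x + 1"]) auto
  then show ?thesis by (simp add: sum.distrib)
qed

lemma pderiv_sum': "pderiv (sum f A) = (\<Sum>x\<in>A. pderiv (f x :: 'b::idom poly))"
  by (induction A rule: infinite_finite_induct) (auto simp: pderiv_add)

lemma map_poly_pCons0: "f 0 = 0 \<Longrightarrow> map_poly f (pCons 0 p) = pCons 0 (map_poly f p)"
  by (rule poly_eqI) (simp add: coeff_map_poly coeff_pCons split: nat.splits)

lemma map_poly_const': "f 0 = 0 \<Longrightarrow> map_poly f [:c:] = [:f c:]"
  by (rule poly_eqI) (simp add: coeff_map_poly coeff_pCons split: nat.splits)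

context
  fixes a :: "nat \<Rightarrow> 'a::finite_field" and n :: nat and qq :: nat
  assumes n1: "n \<ge> 1" and an: "a n = 1" and qq_def: "qq = card (UNIV :: 'a set)"
begin

definition "P0 = (\<Sum>i\<le>n. monom (a i) (qq ^ i - 1))"
definition "Gp = map_poly (\<lambda>c. [:c:]) P0 + [:[:0, 1:]:]"

lemma q2: "qq \<ge> 2" using card_ge2[where 'a='a] qq_def by simp

lemma of_nat_qq: "of_nat qq = (0::'a)" using of_nat_card0[where 'a='a] qq_def by simp

lemma qpow_pos: "qq ^ i \<ge> 1"
  using q2 by simp

lemma qpow_inj: "qq ^ i - 1 = qq ^ j - 1 \<longleftrightarrow> i = j"
proof -
  have "qq ^ i - 1 = qq ^ j - 1 \<longleftrightarrow> qq ^ i = qq ^ j" using qpow_pos[of i] qpow_pos[of j] by linarith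
  also have "\<dots> \<longleftrightarrow> i = j" using q2 by (simp add: power_inject_exp)
  finally show ?thesis .
qed

lemma coeff_P0: "coeff P0 k = (\<Sum>i\<le>n. if qq ^ i - 1 = k then a i else 0)"
  unfolding P0_def by (simp add: coeff_sum)

lemma coeff_P0_top: "coeff P0 (qq ^ n - 1) = 1"
proof -
  have "coeff P0 (qq ^ n - 1) = (\<Sum>i\<le>n. if i = n then a i else 0)"
    unfolding coeff_P0 using qpow_inj by simp
  also have "\<dots> = 1" using an by simp
  finally show ?thesis .
qed

lemma coeff_P0_big: "k > qq ^ n - 1 \<Longrightarrow> coeff P0 k = 0"
proof -
  assume k: "k > qq ^ n - 1"
  have "qq ^ i - 1 \<noteq> k" if "i \<le> n" for i
  proof -
    have "qq ^ i \<le> qq ^ n" using that q2 by (simp add: power_increasing)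
    then show ?thesis using k by linarith
  qed
  then show ?thesis unfolding coeff_P0 by simp
qed

lemma coeff_Gp: "coeff Gp k = [:coeff P0 k:] + (if k = 0 then [:0, 1:] else 0)"
  unfolding Gp_def by (simp add: coeff_map_poly coeff_pCons split: nat.splits)

lemma coeff_Gp0: "coeff Gp 0 = [:coeff P0 0, 1:]"
  unfolding coeff_Gp by simp

lemma qn_big: "qq ^ n \<ge> 2"
proof -
  have "qq ^ 1 \<le> qq ^ n" using n1 q2 by (intro power_increasing) auto
  then show ?thesis using q2 by simp
qed

lemma degree_Gp: "degree Gp = qq ^ n - 1"
proof (rule antisym)
  show "degree Gp \<le> qq ^ n - 1"
    by (rule degree_le) (auto simp: coeff_Gp coeff_P0_big)
  have "coeff Gp (qq ^ n - 1) = [:coeff P0 (qq ^ n - 1):]" using qn_big by (simp add: coeff_Gp)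
  then have "coeff Gp (qq ^ n - 1) = 1" using coeff_P0_top by simp
  then show "qq ^ n - 1 \<le> degree Gp" by (metis le_degree one_neq_zero)
qed

lemma irr_Gp: "irreducible Gp"
proof (rule irr_bivar)
  show "coeff Gp 0 = [:coeff P0 0, 1:]" by (rule coeff_Gp0)
  show "degree (coeff Gp k) = 0" if "k > 0" for k using that by (simp add: coeff_Gp)
  show "degree Gp > 0" using degree_Gp qn_big by simp
qed

lemma qpoly_eq: "q_poly qq n a = P0 * [:0, 1:]"
proof -
  have "monom (a i) (qq ^ i - 1) * [:0, 1:] = monom (a i) (qq ^ i)" for i
  proof -
    have "Suc (qq ^ i - 1) = qq ^ i" using qpow_pos[of i] by simp
    have "monom (a i) (qq ^ i - 1) * [:0, 1:] = pCons 0 (monom (a i) (qq ^ i - 1))" by (simp add: mult.commute)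
    also have "\<dots> = monom (a i) (Suc (qq ^ i - 1))" by (simp add: monom_Suc)
    finally show ?thesis using \<open>Suc (qq ^ i - 1) = qq ^ i\<close> by simp
  qed
  note eq = this
  have "P0 * [:0, 1:] = (\<Sum>i\<le>n. monom (a i) (qq ^ i - 1) * [:0, 1:])"
    unfolding P0_def by (rule sum_distrib_right)
  also have "\<dots> = (\<Sum>i\<le>n. monom (a i) (qq ^ i))" by (rule sum.cong[OF refl]) (rule eq)
  finally show ?thesis unfolding q_poly_def by simp
qed

lemma lift_Ft_eq: "lift_Ft p = map_poly to_fract (map_poly (\<lambda>c. [:c:]) p)"
  unfolding lift_Ft_def by (subst map_poly_map_poly) (auto simp: o_def)

definition "HH = map_poly (\<lambda>c. [:c:]) (q_poly qq n a) + monom [:0, 1:] 1"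

lemma HH_eq: "HH = Gp * [:0, 1:]"
proof -
  have "map_poly (\<lambda>c. [:c:]) (q_poly qq n a) = map_poly (\<lambda>c. [:c:]) P0 * [:0, 1:]"
    unfolding qpoly_eq by (simp add: coeff_lift_hom.hom_mult map_poly_pCons0)
  moreover have "monom [:0, 1::'a:] 1 = [:[:0, 1:]:] * [:0, 1:]" by (simp add: monom_Suc monom_0)
  ultimately show ?thesis unfolding HH_def Gp_def by (simp add: algebra_simps)
qed

lemma f_eq: "lift_Ft (q_poly qq n a) + monom tvar 1 = map_poly to_fract Gp * [:0, 1:]"
proof -
  have "lift_Ft (q_poly qq n a) + monom tvar 1 = map_poly to_fract HH"
    unfolding HH_def lift_Ft_eq tvar_def by (simp add: map_poly_monom)
  also have "\<dots> = map_poly to_fract Gp * [:0, 1:]" unfolding HH_eq by (simp add: fract_poly_mult map_poly_pCons0)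
  finally show ?thesis .
qed

lemma pderiv_HH: "pderiv HH = [:[:a 0, 1:]:]"
proof -
  have "pderiv (q_poly qq n a) = (\<Sum>i\<le>n. monom (of_nat (qq ^ i) * a i) (qq ^ i - 1))"
    unfolding q_poly_def pderiv_sum' by (simp add: pderiv_monom)
  also have "\<dots> = (\<Sum>i\<le>n. if i = 0 then [:a 0:] else 0)"
  proof (rule sum.cong[OF refl])
    fix i assume "i \<in> {..n}"
    show "monom (of_nat (qq ^ i) * a i) (qq ^ i - 1) = (if i = 0 then [:a 0:] else 0)"
    proof (cases "i = 0")
      case False
      then have "of_nat (qq ^ i) = (0::'a)" using of_nat_qq by (simp add: of_nat_power)
      then show ?thesis using False by simp
    qed (simp add: monom_0)
  qed
  also have "\<dots> = [:a 0:]" by simp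
  finally have pq: "pderiv (q_poly qq n a) = [:a 0:]" .
  have "pderiv HH = map_poly (\<lambda>c. [:c:]) (pderiv (q_poly qq n a)) + [:[:0, 1:]:]"
    unfolding HH_def by (simp add: coeff_lift_hom.map_poly_pderiv pderiv_add pderiv_monom monom_0)
  then show ?thesis unfolding pq by (simp add: map_poly_const')
qed

end


lemma prod_dup: "prod_list (map f (xs @ [y] @ ys @ [y] @ zs)) = f y * f y * prod_list (map f (xs @ ys @ zs))"
  for f :: "'x \<Rightarrow> 'y::comm_monoid_mult"
  by (simp add: mult_ac)

lemma galois_part:
  fixes \<phi> :: "'b::field \<Rightarrow> 'c::field" and g :: "'b poly"
  assumes emb: "field_embedding \<phi>" and spl: "splits (map_poly \<phi> (g * [:0, 1:]))"
    and irr: "irreducible g" and pd: "pderiv (g * [:0, 1:]) = [:d:]" and d0: "d \<noteq> 0"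
    and g0: "poly g 0 \<noteq> 0"
  shows "degree g dvd card (galois_group \<phi> (g * [:0, 1:]))"
proof -
  have h0: "\<phi> 0 = 0"
  proof -
    have "\<phi> (0 + 0) = \<phi> 0 + \<phi> 0" using emb unfolding field_embedding_def by blast
    then have "\<phi> 0 + \<phi> 0 = \<phi> 0 + 0" by simp
    then show ?thesis by (simp only: add_left_cancel)
  qed
  interpret ph: field_hom \<phi> using emb h0 unfolding field_embedding_def by unfold_locales auto
  interpret mph: map_poly_inj_idom_hom \<phi> ..
  define F where "F = map_poly \<phi> (g * [:0, 1:])"
  define g' where "g' = map_poly \<phi> g"
  define k where "k = range \<phi>"
  obtain c rs where Fs: "F = Polynomial.smult c (\<Prod>r\<leftarrow>rs. [:-r, 1:])" using spl unfolding splits_def F_def by blast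
  have gnz: "g \<noteq> 0" using irr by auto
  have mpx: "map_poly \<phi> [:0, 1:] = [:0, 1:]" by simp
  have Fg: "F = g' * [:0, 1:]" unfolding F_def g'_def by (simp add: mph.hom_mult map_poly_pCons0)
  have Fnz: "F \<noteq> 0" using gnz unfolding Fg g'_def by simp
  have c0: "c \<noteq> 0" using Fnz Fs by auto
  have sfk: "is_subfield k" unfolding is_subfield_def k_def
  proof (intro conjI ballI)
    show "0 \<in> range \<phi>" by (metis ph.hom_zero rangeI)
    show "1 \<in> range \<phi>" by (metis ph.hom_one rangeI)
    fix x y assume "x \<in> range \<phi>" "y \<in> range \<phi>"
    then obtain u v where "x = \<phi> u" "y = \<phi> v" by blast
    then show "x + y \<in> range \<phi>" "x * y \<in> range \<phi>" by (metis ph.hom_add rangeI, metis ph.hom_mult rangeI)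
  next
    fix x assume "x \<in> range \<phi>"
    then obtain u where "x = \<phi> u" by blast
    then show "- x \<in> range \<phi>" "inverse x \<in> range \<phi>" by (metis ph.hom_uminus rangeI, metis ph.hom_inverse rangeI)
  qed
  have povk: "pover k (map_poly \<phi> p)" for p unfolding pover_def k_def by simp
  have Fk: "pover k F" unfolding F_def by (rule povk)
  have g'k: "pover k g'" unfolding g'_def by (rule povk)
  interpret S: split_setup k F c rs by unfold_locales (use sfk Fk Fs c0 in auto)
  have degF: "degree F = degree g + 1" unfolding Fg g'_def using gnz by (simp add: degree_mult_eq)
  have lenrs: "length rs = degree F" unfolding Fs using c0 degree_linear_factors[of "\<lambda>r. - r" rs] by simp
  have pdF: "pderiv F = [:\<phi> d:]" unfolding F_def ph.map_poly_pderiv[symmetric] pd by (simp add: map_poly_const')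
  have dist: "distinct rs"
  proof (rule ccontr)
    assume "\<not> distinct rs"
    then obtain xs ys zs y where rs: "rs = xs @ [y] @ ys @ [y] @ zs" using not_distinct_decomp by blast
    define L where "L = [:-y, 1::'c:]"
    have "F = L * L * Polynomial.smult c (\<Prod>r\<leftarrow>xs @ ys @ zs. [:-r, 1:])"
      unfolding Fs rs L_def prod_dup[of "\<lambda>r. [:-r, 1:]"] by (simp only: mult_smult_right)
    then obtain Q where FQ: "F = L * L * Q" by blast
    have "pderiv F = L * (L * pderiv Q + Q * pderiv L + Q * pderiv L)"
      unfolding FQ by (simp add: pderiv_mult algebra_simps)
    then have "L dvd [:\<phi> d:]" using pdF by (metis dvd_triv_left)
    moreover have "\<phi> d \<noteq> 0" using d0 by simp
    ultimately have "degree L \<le> degree [:\<phi> d:]" by (intro dvd_imp_degree_le) auto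
    then show False unfolding L_def by simp
  qed
  define R where "R = {x. poly g' x = 0}"
  have rootsF: "set rs = R \<union> {0}" "0 \<notin> R"
  proof -
    have "poly g' 0 \<noteq> 0" unfolding g'_def using g0 by (simp add: poly_0_coeff_0 coeff_map_poly)
    then show "0 \<notin> R" unfolding R_def by simp
    show "set rs = R \<union> {0}" unfolding S.roots_F[symmetric] R_def Fg by auto
  qed
  have cardR: "card R = degree g"
  proof -
    have "card (set rs) = degree g + 1" using distinct_card[OF dist] lenrs degF by simp
    moreover have "finite R" using rootsF by (metis finite_Un finite_set)
    ultimately show ?thesis using rootsF by simp
  qed
  have finR: "finite R" using rootsF by (metis finite_Un finite_set)
  have degg: "degree g > 0"
  proof (rule ccontr)
    assume "\<not> degree g > 0"
    then have "degree g = 0" by simp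
    then have "is_unit g" using gnz by (simp add: is_unit_iff_degree)
    then show False using irr by (simp add: irreducible_def)
  qed
  then obtain \<alpha> where \<alpha>R: "\<alpha> \<in> R" using cardR by (metis card.empty ex_in_conv less_irrefl)
  have g'nz: "g' \<noteq> 0" unfolding g'_def using gnz by simp
  have \<alpha>r: "poly g' \<alpha> = 0" using \<alpha>R R_def by simp
  obtain m where mp: "minp k \<alpha> m" using minpoly_exists[OF sfk g'k g'nz \<alpha>r] by blast
  have \<alpha>F: "poly F \<alpha> = 0" unfolding Fg using \<alpha>r by simp
  have bk: "\<exists>p'. p = map_poly \<phi> p'" if "pover k p" for p
  proof -
    have i0: "inv_into UNIV \<phi> 0 = 0" by (metis ph.hom_zero ph.injectivity inv_f_f injI)
    have "map_poly \<phi> (map_poly (inv_into UNIV \<phi>) p) = p"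
    proof (rule poly_eqI)
      fix i
      have "coeff p i \<in> range \<phi>" using that unfolding pover_def k_def by blast
      then show "coeff (map_poly \<phi> (map_poly (inv_into UNIV \<phi>) p)) i = coeff p i"
        using i0 by (simp add: coeff_map_poly f_inv_into_f)
    qed
    then show ?thesis by metis
  qed
  have mroot: "poly m \<beta> = 0" if "\<beta> \<in> R" for \<beta>
  proof -
    obtain h where h: "pover k h" "g' = m * h" using mp g'k \<alpha>r unfolding minp_def by blast
    obtain m' where m': "m = map_poly \<phi> m'" using bk mp unfolding minp_def by blast
    obtain h' where h': "h = map_poly \<phi> h'" using bk h(1) by blast
    have "map_poly \<phi> g = map_poly \<phi> (m' * h')" using h(2) m' h' unfolding g'_def by (simp add: mph.hom_mult)
    then have "g = m' * h'" by simp
    then have "m' dvd 1 \<or> h' dvd 1" using irr irreducibleD by blast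
    moreover have "\<not> m' dvd 1"
    proof
      assume "m' dvd 1"
      then have "degree m' = 0" by (simp add: is_unit_iff_degree)
      then have "degree m = 0" using m' by simp
      then show False using minp_deg[OF mp] by simp
    qed
    ultimately have "h' dvd 1" by blast
    then have "degree h = 0" using h' by (simp add: is_unit_iff_degree)
    then have hc: "h = [:coeff h 0:]" by (metis degree_0_id)
    have "h \<noteq> 0" using g'nz h(2) by auto
    then have e0: "coeff h 0 \<noteq> 0" using hc by (metis pCons_eq_0_iff pCons_0_0)
    have "poly g' \<beta> = poly m \<beta> * coeff h 0" using h(2) hc by (metis mult_zero_right add.right_neutral poly_mult poly_pCons poly_0)
    then show ?thesis using that e0 unfolding R_def by simp
  qed
  have KKeq: "splitting_field_in \<phi> (g * [:0, 1:]) = S.KK"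
    using S.KK_def unfolding splitting_field_in_def F_def k_def by simp
  have GGeq: "galois_group \<phi> (g * [:0, 1:]) = GG S.KK k"
    unfolding galois_group_def Let_def KKeq GG_def k_def by auto
  have \<alpha>K: "\<alpha> \<in> S.KK" using rootsF S.rs_KK \<alpha>R by auto
  have cl: "x + y \<in> S.KK \<and> x * y \<in> S.KK" if "x \<in> S.KK" "y \<in> S.KK" for x y
    using that sf_add[OF S.KK_sf] sf_mult[OF S.KK_sf] by simp
  have "card R dvd card (GG S.KK k)"
  proof (rule orbit_count[OF S.k_KK cl \<alpha>K finR])
    fix \<sigma> assume s: "\<sigma> \<in> GG S.KK k"
    have fixk: "\<forall>x\<in>k. \<sigma> x = x" using s by (simp add: GG_def)
    have "\<sigma> 1 = 1" using fixk sf_1[OF sfk] by simp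
    then have hm: "homo S.KK \<sigma>" using s unfolding GG_def homo_def by blast
    have g'K: "pover S.KK g'" using g'k S.k_KK unfolding pover_def by blast
    have "poly g' (\<sigma> \<alpha>) = poly (map_poly \<sigma> g') (\<sigma> \<alpha>)" using mp_fix[OF g'k fixk] by simp
    also have "\<dots> = \<sigma> (poly g' \<alpha>)" by (rule poly_mp[OF S.KK_sf hm g'K \<alpha>K])
    also have "\<dots> = 0" using \<alpha>r hom0[OF S.KK_sf hm] by simp
    finally show "\<sigma> \<alpha> \<in> R" unfolding R_def by simp
  next
    fix \<beta> assume \<beta>: "\<beta> \<in> R"
    from S.autom[OF mp \<alpha>F mroot[OF \<beta>]] obtain \<sigma> where
      s: "homo S.KK \<sigma>" "\<forall>x\<in>k. \<sigma> x = x" "\<sigma> \<alpha> = \<beta>" "bij_betw \<sigma> S.KK S.KK" by blast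
    define \<sigma>' where "\<sigma>' x = (if x \<in> S.KK then \<sigma> x else x)" for x
    have "bij_betw \<sigma>' S.KK S.KK" using s(4) by (rule bij_betw_cong[THEN iffD1, rotated]) (simp add: \<sigma>'_def)
    moreover have "\<sigma>' \<in> GG S.KK k"
      unfolding GG_def using calculation s(1,2) S.k_KK cl
      by (auto simp: \<sigma>'_def homo_def)
    moreover have "\<sigma>' \<alpha> = \<beta>" using s(3) \<alpha>K by (simp add: \<sigma>'_def)
    ultimately show "\<exists>\<sigma>\<in>GG S.KK k. \<sigma> \<alpha> = \<beta>" by blast
  qed
  then show ?thesis unfolding GGeq cardR .
qed


theorem mainTheorem7:
  fixes a :: "nat \<Rightarrow> 'a::finite_field" and n :: nat
    and \<phi> :: "'a poly fract \<Rightarrow> 'c::field"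
  assumes "n \<ge> 1" and "a n = 1"
  defines "q \<equiv> card (UNIV :: 'a set)"
  defines "f \<equiv> lift_Ft (q_poly q n a) + monom tvar 1"
  assumes "field_embedding \<phi>" and "splits (map_poly \<phi> f)"
  shows "irreducible (f div [:0, 1:])
         \<and> (q ^ n - 1) dvd card (galois_group \<phi> f)"
proof -
  have qd: "q = card (UNIV :: 'a set)" by (simp add: q_def)
  note ctx = assms(1) assms(2) qd
  define G where "G = Gp a n q"
  define g where "g = map_poly to_fract G"
  have fG: "f = g * [:0, 1:]" unfolding f_def g_def G_def using f_eq[where a=a and n=n and qq=q, OF ctx] .
  have div: "f div [:0, 1:] = g" unfolding fG by (rule nonzero_mult_div_cancel_right) simp
  have dG: "degree G = q ^ n - 1" unfolding G_def by (rule degree_Gp[where a=a and n=n and qq=q, OF ctx])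
  have dG0: "degree G \<noteq> 0" using dG qn_big[where a=a and n=n and qq=q, OF ctx] by simp
  have Geq: "G = map_poly (\<lambda>c. [:c:]) (P0 a n q) + [:[:0, 1:]:]" unfolding G_def by (rule Gp_def[where a=a and n=n and qq=q, OF ctx])
  have irr: "irreducible g" unfolding g_def using irr_frac[of "P0 a n q"] Geq dG0 by simp
  have dg: "degree g = q ^ n - 1" unfolding g_def using dG by simp
  have gx: "g * [:0, 1:] = map_poly to_fract (HH a n q)"
    unfolding g_def HH_eq[where a=a and n=n and qq=q, OF ctx] G_def by (simp add: fract_poly_mult map_poly_pCons0)
  have pd: "pderiv (g * [:0, 1:]) = [:to_fract [:a 0, 1:]:]"
    unfolding gx to_fract_hom.map_poly_pderiv[symmetric] pderiv_HH[where a=a and n=n and qq=q, OF ctx] by (simp add: map_poly_const')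
  have d0: "to_fract [:a 0, 1:] \<noteq> 0" by simp
  have g0: "poly g 0 \<noteq> 0"
    unfolding g_def G_def by (simp add: poly_0_coeff_0 coeff_map_poly coeff_Gp0[where a=a and n=n and qq=q, OF ctx])
  have "degree g dvd card (galois_group \<phi> (g * [:0, 1:]))"
    by (rule galois_part[OF assms(5) assms(6)[unfolded fG] irr pd d0 g0])
  then show ?thesis using div irr dg fG by simp
qed

end
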